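(* For all $r\in\mathbb{N}$, $f_2(\triangle_r)\ge r-1$.
   Context: A distance function on $G$ is $d:E(G)\to\mathbb{R}_{\ge0}$ with $d(vw)\le\sum_i d(v_{i-1}v_i)$ for every edge $vw$ and every $v$–$w$ path. An isometric embedding of $(G,d)$ in $\ell_2^k$ is $\phi:V(G)\to\mathbb{R}^k$ with $\|\phi(v)-\phi(w)\|_2=d(vw)$ for all edges $vw$. $d$ is $\ell_2$-realizable if it has such an embedding for some $k$; $f_2(G,d)$ is the least such $k$; $f_2(G)=\sup_d f_2(G,d)$ over all $\ell_2$-realizable $d$. The triangular grid $\triangle_r$ has vertex set $\{v_{i,j}\mid i,j\in[r],\ i\le j\}$, with $v_{i,j}v_{k,\ell}$ an edge iff $(i-k,j-\ell)\in\{\pm(1,0),\pm(0,1),\pm(1,1)\}$. *)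

theory Defs
  imports "HOL-Analysis.Analysis" "HOL-Library.Extended_Nat"
begin

text \<open>A distance function is a map on edges
(represented as a function on 2-element sets; only its values on E matter).\<close>

definition is_path :: "'a set \<Rightarrow> 'a set set \<Rightarrow> 'a list \<Rightarrow> bool" where
  "is_path V E ps \<longleftrightarrow> ps \<noteq> [] \<and> distinct ps \<and> set ps \<subseteq> V \<and>
     (\<forall>i. Suc i < length ps \<longrightarrow> {ps ! i, ps ! Suc i} \<in> E)"

definition distance_function :: "'a set \<Rightarrow> 'a set set \<Rightarrow> ('a set \<Rightarrow> real) \<Rightarrow> bool" where
  "distance_function V E d \<longleftrightarrow>
     (\<forall>e\<in>E. d e \<ge> 0) \<and>
     (\<forall>v w ps. {v, w} \<in> E \<longrightarrow> is_path V E ps \<longrightarrow> hd ps = v \<longrightarrow> last ps = w \<longrightarrow>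
        d {v, w} \<le> (\<Sum>i<length ps - 1. d {ps ! i, ps ! Suc i}))"

text \<open>Points of \<ell>_2^k are represented as functions nat \<Rightarrow> real, only the
first k coordinates being relevant.\<close>

definition l2dist :: "nat \<Rightarrow> (nat \<Rightarrow> real) \<Rightarrow> (nat \<Rightarrow> real) \<Rightarrow> real" where
  "l2dist k x y = sqrt (\<Sum>i<k. (x i - y i)\<^sup>2)"

definition isometric_embedding ::
  "'a set \<Rightarrow> 'a set set \<Rightarrow> ('a set \<Rightarrow> real) \<Rightarrow> nat \<Rightarrow> ('a \<Rightarrow> nat \<Rightarrow> real) \<Rightarrow> bool" where
  "isometric_embedding V E d k \<phi> \<longleftrightarrow>
     (\<forall>v\<in>V. \<forall>i\<ge>k. \<phi> v i = 0) \<and>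
     (\<forall>v w. {v, w} \<in> E \<longrightarrow> l2dist k (\<phi> v) (\<phi> w) = d {v, w})"

definition embeddable :: "'a set \<Rightarrow> 'a set set \<Rightarrow> ('a set \<Rightarrow> real) \<Rightarrow> nat \<Rightarrow> bool" where
  "embeddable V E d k \<longleftrightarrow> (\<exists>\<phi>. isometric_embedding V E d k \<phi>)"

definition l2_realizable :: "'a set \<Rightarrow> 'a set set \<Rightarrow> ('a set \<Rightarrow> real) \<Rightarrow> bool" where
  "l2_realizable V E d \<longleftrightarrow> (\<exists>k. embeddable V E d k)"

definition f2_dist :: "'a set \<Rightarrow> 'a set set \<Rightarrow> ('a set \<Rightarrow> real) \<Rightarrow> nat" where
  "f2_dist V E d = (LEAST k. embeddable V E d k)"

definition f2 :: "'a set \<Rightarrow> 'a set set \<Rightarrow> enat" where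
  "f2 V E = (SUP d \<in> {d. distance_function V E d \<and> l2_realizable V E d}. enat (f2_dist V E d))"

definition tri_vertices :: "nat \<Rightarrow> (nat \<times> nat) set" where
  "tri_vertices r = {(i, j). 1 \<le> i \<and> i \<le> j \<and> j \<le> r}"

definition tri_edges :: "nat \<Rightarrow> (nat \<times> nat) set set" where
  "tri_edges r = {{(i, j), (k, l)} | i j k l.
      (i, j) \<in> tri_vertices r \<and> (k, l) \<in> tri_vertices r \<and>
      (int i - int k, int j - int l) \<in> {(1,0), (-1,0), (0,1), (0,-1), (1,1), (-1,-1)}}"

end

theory Submission
  imports Defs
begin

fun psi :: "nat \<Rightarrow> nat \<Rightarrow> nat \<Rightarrow> real" where
  "psi 0 i c = (if c = i then 1 else 0)"
| "psi (Suc g) i c = (psi g i c + psi g (Suc i) c) / 2"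

definition Psi :: "nat \<times> nat \<Rightarrow> nat \<Rightarrow> real" where
  "Psi v = psi (snd v - fst v) (fst v)"

lemma psi_supp: "i + g < c \<Longrightarrow> psi g i c = 0"
  by (induction g arbitrary: i) auto

definition sqd :: "nat \<Rightarrow> (nat \<Rightarrow> real) \<Rightarrow> (nat \<Rightarrow> real) \<Rightarrow> real" where
  "sqd k x y = (\<Sum>c<k. (x c - y c)^2)"

lemma l2dist_sqd: "l2dist k x y = sqrt (sqd k x y)"
  by (simp add: l2dist_def sqd_def)

lemma sqd_nonneg: "0 \<le> sqd k x y"
  by (simp add: sqd_def sum_nonneg)

lemma sqd_sym: "sqd k x y = sqd k y x"
  by (simp add: sqd_def power2_commute)

lemma l2dist_sym: "l2dist k x y = l2dist k y x"
  unfolding l2dist_def by (simp add: power2_commute)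

lemma l2dist_tri: "l2dist k x z \<le> l2dist k x y + l2dist k y z"
proof -
  have "L2_set (\<lambda>c. (x c - y c) + (y c - z c)) {..<k} \<le> L2_set (\<lambda>c. x c - y c) {..<k} + L2_set (\<lambda>c. y c - z c) {..<k}"
    by (rule L2_set_triangle_ineq)
  then show ?thesis by (simp add: l2dist_def L2_set_def)
qed

lemma l2dist_chain: "l2dist k (g 0) (g n) \<le> (\<Sum>i<n. l2dist k (g i) (g (Suc i)))"
proof (induction n)
  case 0
  then show ?case by (simp add: l2dist_def)
next
  case (Suc n)
  have "l2dist k (g 0) (g (Suc n)) \<le> l2dist k (g 0) (g n) + l2dist k (g n) (g (Suc n))"
    by (rule l2dist_tri)
  also have "\<dots> \<le> (\<Sum>i<n. l2dist k (g i) (g (Suc i))) + l2dist k (g n) (g (Suc n))"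
    using Suc by simp
  finally show ?case by simp
qed

definition dd :: "nat \<Rightarrow> (nat \<times> nat) set \<Rightarrow> real" where
  "dd r e = (SOME x. \<exists>u v. e = {u, v} \<and> x = l2dist (Suc r) (Psi u) (Psi v))"

lemma dd_eq: "dd r {u, v} = l2dist (Suc r) (Psi u) (Psi v)"
proof -
  have "\<exists>x. \<exists>u' v'. {u, v} = {u', v'} \<and> x = l2dist (Suc r) (Psi u') (Psi v')" by blast
  from someI_ex[OF this] obtain u' v' where "{u, v} = {u', v'}"
    "dd r {u, v} = l2dist (Suc r) (Psi u') (Psi v')" unfolding dd_def by blast
  then show ?thesis by (auto simp: doubleton_eq_iff l2dist_sym)
qed

lemma tri_edge:
  "(i, j) \<in> tri_vertices r \<Longrightarrow> (p, q) \<in> tri_vertices r \<Longrightarrow>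
   (int i - int p, int j - int q) \<in> {(1,0), (-1,0), (0,1), (0,-1), (1,1), (-1,-1)} \<Longrightarrow>
   {(i, j), (p, q)} \<in> tri_edges r"
  unfolding tri_edges_def by blast

lemma dist_fun: "distance_function (tri_vertices r) (tri_edges r) (dd r)"
  unfolding distance_function_def
proof (intro conjI ballI allI impI)
  fix e assume "e \<in> tri_edges r"
  then obtain u v where "e = {u, v}" unfolding tri_edges_def by blast
  then show "0 \<le> dd r e" by (simp add: dd_eq l2dist_sqd sqd_nonneg)
next
  fix v w ps
  assume p: "is_path (tri_vertices r) (tri_edges r) ps" and h: "hd ps = v" and l: "last ps = w"
  have ne: "ps \<noteq> []" using p by (simp add: is_path_def)
  have "dd r {v, w} = l2dist (Suc r) (Psi (ps ! 0)) (Psi (ps ! (length ps - 1)))"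
    using ne h l by (simp add: dd_eq hd_conv_nth last_conv_nth)
  also have "\<dots> \<le> (\<Sum>i<length ps - 1. l2dist (Suc r) (Psi (ps ! i)) (Psi (ps ! Suc i)))"
    by (rule l2dist_chain[where g="\<lambda>i. Psi (ps ! i)"])
  also have "\<dots> = (\<Sum>i<length ps - 1. dd r {ps ! i, ps ! Suc i})"
    by (simp add: dd_eq)
  finally show "dd r {v, w} \<le> (\<Sum>i<length ps - 1. dd r {ps ! i, ps ! Suc i})" .
qed

lemma psi_emb: "isometric_embedding (tri_vertices r) (tri_edges r) (dd r) (Suc r) Psi"
  unfolding isometric_embedding_def
proof (intro conjI ballI allI impI)
  fix v c assume "v \<in> tri_vertices r" "Suc r \<le> c"
  then show "Psi v c = 0"
    by (cases v) (auto simp: tri_vertices_def Psi_def intro!: psi_supp)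
next
  fix v w show "l2dist (Suc r) (Psi v) (Psi w) = dd r {v, w}" by (simp add: dd_eq)
qed

lemma sq_sum_expand:
  fixes u :: "'i \<Rightarrow> real"
  shows "(\<Sum>c\<in>C. (\<Sum>a\<in>A. u a * w a c)^2) = (\<Sum>a\<in>A. \<Sum>b\<in>A. u a * u b * (\<Sum>c\<in>C. w a c * w b c))"
proof -
  have "(\<Sum>c\<in>C. (\<Sum>a\<in>A. u a * w a c)^2) = (\<Sum>c\<in>C. \<Sum>a\<in>A. \<Sum>b\<in>A. u a * u b * (w a c * w b c))"
    by (simp add: power2_eq_square sum_product mult_ac)
  also have "\<dots> = (\<Sum>a\<in>A. \<Sum>c\<in>C. \<Sum>b\<in>A. u a * u b * (w a c * w b c))"
    by (rule sum.swap)
  also have "\<dots> = (\<Sum>a\<in>A. \<Sum>b\<in>A. \<Sum>c\<in>C. u a * u b * (w a c * w b c))"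
    by (rule sum.cong[OF refl], rule sum.swap)
  also have "\<dots> = (\<Sum>a\<in>A. \<Sum>b\<in>A. u a * u b * (\<Sum>c\<in>C. w a c * w b c))"
    by (simp add: sum_distrib_left)
  finally show ?thesis .
qed

lemma gram_sum:
  fixes u :: "'i \<Rightarrow> real"
  assumes "finite A"
  shows "(\<Sum>a\<in>A. \<Sum>b\<in>A. u a * u b * (if a = b then 2 else 1)) = (\<Sum>a\<in>A. u a)^2 + (\<Sum>a\<in>A. (u a)^2)"
proof -
  have "(\<Sum>b\<in>A. u a * u b * (if a = b then 2 else 1)) = u a * (\<Sum>b\<in>A. u b) + (u a)^2" if "a \<in> A" for a
  proof -
    have "(\<Sum>b\<in>A. u a * u b * (if a = b then 2 else 1)) = (\<Sum>b\<in>A. u a * u b + (if a = b then (u a)^2 else 0))"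
      by (rule sum.cong) (auto simp: power2_eq_square)
    also have "\<dots> = u a * (\<Sum>b\<in>A. u b) + (u a)^2"
      using assms that by (simp add: sum.distrib sum_distrib_left)
    finally show ?thesis .
  qed
  then have "(\<Sum>a\<in>A. \<Sum>b\<in>A. u a * u b * (if a = b then 2 else 1)) = (\<Sum>a\<in>A. u a * (\<Sum>b\<in>A. u b) + (u a)^2)"
    by (rule sum.cong[OF refl])
  also have "\<dots> = (\<Sum>a\<in>A. u a)^2 + (\<Sum>a\<in>A. (u a)^2)"
    by (simp add: sum.distrib sum_distrib_right[symmetric] power2_eq_square)
  finally show ?thesis .
qed

lemma alg_id:
  fixes t x W q :: real
  assumes "q = t + 1" "q > 0"
  shows "(x/q)^2 + (W - 2 * x^2/q + t * x^2/q^2) = W - x^2/q"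
proof -
  define a where "a = x^2/q^2"
  have q0: "q \<noteq> 0" using assms by simp
  have e1: "(x/q)^2 = a" by (simp add: a_def power_divide)
  have e2: "t * x^2/q^2 = t * a" by (simp add: a_def)
  have e3: "t * a + a = x^2/q"
  proof -
    have "t * a + a = q * a" using assms(1) by (simp add: algebra_simps)
    also have "\<dots> = x^2/q" using q0 by (simp add: a_def power2_eq_square)
    finally show ?thesis .
  qed
  show ?thesis unfolding e1 e2 using e3 by linarith
qed

lemma gram_bound:
  fixes w :: "nat \<Rightarrow> nat \<Rightarrow> real" and A :: "nat set"
  assumes fin: "finite A"
    and G: "\<And>a b. a \<in> A \<Longrightarrow> b \<in> A \<Longrightarrow> (\<Sum>c<k. w a c * w b c) = (if a = b then 2 else 1)"
  shows "card A \<le> k"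
proof -
  define m where "m = card A"
  define S where "S c = (\<Sum>a\<in>A. w a c)" for c
  define q where "q = real m + 1"
  define T where "T c = (\<Sum>a\<in>A. (w a c)^2) - (S c)^2 / q" for c
  have mpos: "q > 0" by (simp add: q_def)
  have GG: "(\<Sum>a\<in>A. \<Sum>b\<in>A. u a * u b * (\<Sum>c<k. w a c * w b c)) = (\<Sum>a\<in>A. u a)^2 + (\<Sum>a\<in>A. (u a)^2)"
    for u :: "nat \<Rightarrow> real"
  proof -
    have "(\<Sum>a\<in>A. \<Sum>b\<in>A. u a * u b * (\<Sum>c<k. w a c * w b c)) = (\<Sum>a\<in>A. \<Sum>b\<in>A. u a * u b * (if a = b then 2 else 1))"
      by (intro sum.cong refl) (simp add: G)
    then show ?thesis using gram_sum[OF fin] by simp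
  qed
  have Tle: "T c \<le> 1" if ck: "c < k" for c
  proof -
    define l where "l a = w a c - S c / q" for a
    define y where "y c' = (\<Sum>a\<in>A. l a * w a c')" for c'
    have suml: "(\<Sum>a\<in>A. l a) = S c / q"
    proof -
      have "(\<Sum>a\<in>A. l a) = S c - m * (S c / q)"
        by (simp add: l_def sum_subtractf S_def m_def)
      also have "\<dots> = S c / q" using mpos by (simp add: field_simps q_def)
      finally show ?thesis .
    qed
    have suml2: "(\<Sum>a\<in>A. (l a)^2) = (\<Sum>a\<in>A. (w a c)^2) - 2 * (S c)^2/q + m * (S c)^2 / q^2"
    proof -
      have "(\<Sum>a\<in>A. (l a)^2) = (\<Sum>a\<in>A. (w a c)^2 - 2 * (S c/q) * w a c + (S c/q)^2)"
        by (rule sum.cong) (auto simp: l_def power2_eq_square algebra_simps)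
      also have "\<dots> = (\<Sum>a\<in>A. (w a c)^2) - 2 * (S c/q) * S c + m * (S c/q)^2"
        by (simp add: sum.distrib sum_subtractf sum_distrib_left S_def m_def)
      also have "\<dots> = (\<Sum>a\<in>A. (w a c)^2) - 2 * (S c)^2/q + m * (S c)^2 / q^2"
        using mpos by (simp add: power2_eq_square field_simps)
      finally show ?thesis .
    qed
    have yc: "y c = T c"
    proof -
      have "y c = (\<Sum>a\<in>A. (w a c)^2 - (S c/q) * w a c)"
        by (simp add: y_def l_def power2_eq_square algebra_simps)
      also have "\<dots> = (\<Sum>a\<in>A. (w a c)^2) - (S c/q) * S c"
        by (simp add: sum_subtractf sum_distrib_left S_def)
      also have "\<dots> = T c"
        by (simp add: T_def power2_eq_square)
      finally show ?thesis .
    qed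
    have ny: "(\<Sum>c'<k. (y c')^2) = T c"
    proof -
      have "(\<Sum>c'<k. (y c')^2) = (\<Sum>a\<in>A. l a)^2 + (\<Sum>a\<in>A. (l a)^2)"
        unfolding y_def using sq_sum_expand[where C="{..<k}" and A=A and u=l and w=w] GG[of l] by simp
      also have "\<dots> = T c"
        unfolding suml suml2 T_def by (rule alg_id) (simp_all add: q_def mpos)
      finally show ?thesis .
    qed
    have "(y c)^2 \<le> (\<Sum>c'<k. (y c')^2)"
      using ck by (intro member_le_sum) auto
    then have h: "(T c)^2 \<le> T c" using yc ny by simp
    show "T c \<le> 1"
    proof (rule ccontr)
      assume "\<not> T c \<le> 1"
      then have "T c * 1 < T c * T c" by (intro mult_strict_left_mono) auto
      then show False using h by (simp add: power2_eq_square)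
    qed
  qed
  have s1: "(\<Sum>c<k. \<Sum>a\<in>A. (w a c)^2) = 2 * m"
  proof -
    have "(\<Sum>c<k. \<Sum>a\<in>A. (w a c)^2) = (\<Sum>a\<in>A. \<Sum>c<k. w a c * w a c)"
      by (subst sum.swap) (simp add: power2_eq_square)
    also have "\<dots> = (\<Sum>a\<in>A. 2)" by (intro sum.cong refl) (simp add: G)
    finally show ?thesis by (simp add: m_def)
  qed
  have s2: "(\<Sum>c<k. (S c)^2) = m^2 + m"
  proof -
    have "(\<Sum>c<k. (S c)^2) = (\<Sum>c<k. (\<Sum>a\<in>A. (\<lambda>_. 1::real) a * w a c)^2)"
      by (simp add: S_def)
    also have "\<dots> = (\<Sum>a\<in>A. (\<lambda>_. 1::real) a)^2 + (\<Sum>a\<in>A. ((\<lambda>_. 1::real) a)^2)"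
      using sq_sum_expand[where C="{..<k}" and A=A and u="\<lambda>_. 1::real" and w=w] GG[of "\<lambda>_. 1"] by simp
    finally show ?thesis by (simp add: m_def)
  qed
  have "(\<Sum>c<k. T c) = 2 * m - (m^2 + m) / q"
    unfolding T_def by (simp add: sum_subtractf s1 s2 sum_divide_distrib[symmetric])
  also have "\<dots> = m" using mpos by (simp add: q_def field_simps power2_eq_square)
  finally have sT: "(\<Sum>c<k. T c) = m" .
  have "(\<Sum>c<k. T c) \<le> (\<Sum>c<k. (1::real))" by (intro sum_mono Tle) auto
  then have "real m \<le> real k" using sT by simp
  then show ?thesis by (simp add: m_def)
qed

lemma Psi_mid:
  assumes "i < j"
  shows "Psi (i, j) c = (Psi (i, j - 1) c + Psi (Suc i, j) c) / 2"
proof -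
  have "j - i = Suc (j - Suc i)" "j - 1 - i = j - Suc i" using assms by auto
  then show ?thesis by (simp add: Psi_def)
qed

lemma sqd_mid:
  assumes "\<forall>c<K. m c = (x c + y c) / 2"
  shows "sqd K z m = (sqd K z x + sqd K z y) / 2 - sqd K x y / 4"
proof -
  have "sqd K z m = (\<Sum>c<K. ((z c - x c)^2 + (z c - y c)^2) / 2 - (x c - y c)^2 / 4)"
    unfolding sqd_def
  proof (intro sum.cong refl)
    fix c assume "c \<in> {..<K}"
    then have mc: "m c = (x c + y c) / 2" using assms by simp
    show "(z c - m c)^2 = ((z c - x c)^2 + (z c - y c)^2) / 2 - (x c - y c)^2 / 4"
      unfolding mc by (simp add: power2_eq_square field_simps)
  qed
  also have "\<dots> = (\<Sum>c<K. ((z c - x c)^2 + (z c - y c)^2)) / 2 - (\<Sum>c<K. (x c - y c)^2) / 4"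
    by (simp only: sum_subtractf sum_divide_distrib)
  also have "\<dots> = (sqd K z x + sqd K z y) / 2 - sqd K x y / 4"
    by (simp add: sqd_def sum.distrib)
  finally show ?thesis .
qed

lemma sqd_half:
  assumes "\<forall>c<K. m c = (x c + y c) / 2"
  shows "sqd K x m = sqd K x y / 4" "sqd K m y = sqd K x y / 4"
proof -
  have "sqd K x m = (\<Sum>c<K. (x c - y c)^2 / 4)"
    unfolding sqd_def
  proof (intro sum.cong refl)
    fix c assume "c \<in> {..<K}"
    then have mc: "m c = (x c + y c) / 2" using assms by simp
    show "(x c - m c)^2 = (x c - y c)^2 / 4"
      unfolding mc by (simp add: power2_eq_square field_simps)
  qed
  then show "sqd K x m = sqd K x y / 4" by (simp add: sqd_def sum_divide_distrib)
  have "sqd K m y = (\<Sum>c<K. (x c - y c)^2 / 4)"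
    unfolding sqd_def
  proof (intro sum.cong refl)
    fix c assume "c \<in> {..<K}"
    then have mc: "m c = (x c + y c) / 2" using assms by simp
    show "(m c - y c)^2 = (x c - y c)^2 / 4"
      unfolding mc by (simp add: power2_eq_square field_simps)
  qed
  then show "sqd K m y = sqd K x y / 4" by (simp add: sqd_def sum_divide_distrib)
qed

lemma sqd_mid_forced:
  assumes "sqd k x m = sqd k x y / 4" "sqd k m y = sqd k x y / 4"
  shows "\<forall>c<k. m c = (x c + y c) / 2"
proof -
  have "(\<Sum>c<k. (x c + y c - 2 * m c)^2) = (\<Sum>c<k. 2 * (x c - m c)^2 + 2 * (m c - y c)^2 - (x c - y c)^2)"
    by (intro sum.cong refl) (simp add: power2_eq_square algebra_simps)
  also have "\<dots> = 2 * sqd k x m + 2 * sqd k m y - sqd k x y"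
    by (simp add: sqd_def sum_subtractf sum.distrib sum_distrib_left)
  also have "\<dots> = 0" using assms by simp
  finally have "(\<Sum>c<k. (x c + y c - 2 * m c)^2) = 0" .
  then have "\<forall>c\<in>{..<k}. (x c + y c - 2 * m c)^2 = 0"
    by (subst sum_nonneg_eq_0_iff[symmetric]) auto
  then show ?thesis by auto
qed

locale LB =
  fixes r k :: nat and \<phi> :: "nat \<times> nat \<Rightarrow> nat \<Rightarrow> real"
  assumes emb: "isometric_embedding (tri_vertices r) (tri_edges r) (dd r) k \<phi>"
begin

definition f :: "nat \<times> nat \<Rightarrow> nat \<times> nat \<Rightarrow> real" where
  "f u v = sqd k (\<phi> u) (\<phi> v) - sqd (Suc r) (Psi u) (Psi v)"

lemma f_sym: "f u v = f v u"
  by (simp add: f_def sqd_sym)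

lemma f_refl: "f u u = 0"
  by (simp add: f_def sqd_def)

lemma edge_sqd: "{u, v} \<in> tri_edges r \<Longrightarrow> sqd k (\<phi> u) (\<phi> v) = sqd (Suc r) (Psi u) (Psi v)"
proof -
  assume "{u, v} \<in> tri_edges r"
  then have "l2dist k (\<phi> u) (\<phi> v) = dd r {u, v}" using emb unfolding isometric_embedding_def by blast
  then show ?thesis by (simp add: dd_eq l2dist_sqd sqd_nonneg)
qed

lemma f_edge: "{u, v} \<in> tri_edges r \<Longrightarrow> f u v = 0"
  by (simp add: f_def edge_sqd)

abbreviation V where "V \<equiv> tri_vertices r"

lemma inV: "(i, j) \<in> V \<longleftrightarrow> 1 \<le> i \<and> i \<le> j \<and> j \<le> r"
  by (simp add: tri_vertices_def)

lemma mid_edges: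
  assumes "(i, j) \<in> V" "i < j"
  shows "{(i, j - 1), (i, j)} \<in> tri_edges r" "{(i, j), (Suc i, j)} \<in> tri_edges r"
    "{(i, j - 1), (Suc i, j)} \<in> tri_edges r"
  using assms by (auto intro!: tri_edge simp: inV of_nat_diff)

lemma phi_mid:
  assumes "(i, j) \<in> V" "i < j"
  shows "\<forall>c<k. \<phi> (i, j) c = (\<phi> (i, j - 1) c + \<phi> (Suc i, j) c) / 2"
proof (rule sqd_mid_forced)
  have pm: "\<forall>c<Suc r. Psi (i, j) c = (Psi (i, j - 1) c + Psi (Suc i, j) c) / 2"
    using Psi_mid[OF assms(2)] by simp
  have a: "sqd (Suc r) (Psi (i, j - 1)) (Psi (i, j)) = sqd (Suc r) (Psi (i, j - 1)) (Psi (Suc i, j)) / 4"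
    by (rule sqd_half(1)[OF pm])
  have b: "sqd (Suc r) (Psi (i, j)) (Psi (Suc i, j)) = sqd (Suc r) (Psi (i, j - 1)) (Psi (Suc i, j)) / 4"
    by (rule sqd_half(2)[OF pm])
  show "sqd k (\<phi> (i, j - 1)) (\<phi> (i, j)) = sqd k (\<phi> (i, j - 1)) (\<phi> (Suc i, j)) / 4"
    using a edge_sqd[OF mid_edges(1)[OF assms]] edge_sqd[OF mid_edges(3)[OF assms]] by simp
  show "sqd k (\<phi> (i, j)) (\<phi> (Suc i, j)) = sqd k (\<phi> (i, j - 1)) (\<phi> (Suc i, j)) / 4"
    using b edge_sqd[OF mid_edges(2)[OF assms]] edge_sqd[OF mid_edges(3)[OF assms]] by simp
qed

lemma f_rec:
  assumes "(i, j) \<in> V" "i < j"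
  shows "f z (i, j) = (f z (i, j - 1) + f z (Suc i, j)) / 2"
proof -
  have pm: "\<forall>c<Suc r. Psi (i, j) c = (Psi (i, j - 1) c + Psi (Suc i, j) c) / 2"
    using Psi_mid[OF assms(2)] by simp
  have e: "f (i, j - 1) (Suc i, j) = 0" by (rule f_edge[OF mid_edges(3)[OF assms]])
  show ?thesis
    using sqd_mid[OF phi_mid[OF assms], of "\<phi> z"] sqd_mid[OF pm, of "Psi z"] e
    by (simp add: f_def field_simps)
qed


lemma f_zero_aux:
  "\<forall>i j p q. (i, j) \<in> V \<longrightarrow> (p, q) \<in> V \<longrightarrow> max j q - min i p = s \<longrightarrow> f (i, j) (p, q) = 0"
proof (induction s rule: less_induct)
  case (less s)
  have IH: "f (i, j) (p, q) = 0" if "(i, j) \<in> V" "(p, q) \<in> V" "max j q - min i p < s" for i j p q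
    using less that by blast
  have CL2: "\<forall>p. (p, q) \<in> V \<longrightarrow> i < p \<longrightarrow> q - p = n \<longrightarrow> f (i, i) (p, q) = f (i, i) (q, q) / 2^n"
    if iv: "(i, i) \<in> V" and sq: "q - i = s" for i q n
  proof (induction n)
    case 0
    then show ?case by (auto simp: inV)
  next
    case (Suc n)
    show ?case
    proof (intro allI impI)
      fix p assume pv: "(p, q) \<in> V" and ip: "i < p" and qp: "q - p = Suc n"
      have pq: "p < q" using qp by simp
      have "f (i, i) (p, q) = (f (i, i) (p, q - 1) + f (i, i) (Suc p, q)) / 2"
        by (rule f_rec[OF pv pq])
      moreover have "f (i, i) (p, q - 1) = 0"
        by (rule IH) (use iv pv pq ip sq in \<open>auto simp: inV\<close>)
      moreover have "f (i, i) (Suc p, q) = f (i, i) (q, q) / 2^n"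
        using Suc.IH pv pq ip qp by (auto simp: inV)
      ultimately show "f (i, i) (p, q) = f (i, i) (q, q) / 2 ^ Suc n" by simp
    qed
  qed
  have CL1: "\<forall>j. (i, j) \<in> V \<longrightarrow> j < q \<longrightarrow> j - i = n \<longrightarrow> f (i, j) (p, q) = f (i, i) (p, q) / 2^n"
    if pv: "(p, q) \<in> V" and ip: "i < p" and sq: "q - i = s" for i p q n
  proof (induction n)
    case 0
    then show ?case by (auto simp: inV)
  next
    case (Suc n)
    show ?case
    proof (intro allI impI)
      fix j assume jv: "(i, j) \<in> V" and jq: "j < q" and ji: "j - i = Suc n"
      have ij: "i < j" using ji by simp
      have "f (i, j) (p, q) = f (p, q) (i, j)" by (rule f_sym)
      also have "\<dots> = (f (p, q) (i, j - 1) + f (p, q) (Suc i, j)) / 2"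
        by (rule f_rec[OF jv ij])
      also have "f (p, q) (Suc i, j) = 0"
        by (rule IH) (use jv ij jq ip pv sq in \<open>auto simp: inV\<close>)
      also have "f (p, q) (i, j - 1) = f (i, j - 1) (p, q)" by (rule f_sym)
      also have "f (i, j - 1) (p, q) = f (i, i) (p, q) / 2^n"
        using spec[OF Suc.IH, of "j - 1"] jv ij jq ji by (auto simp: inV)
      finally show "f (i, j) (p, q) = f (i, i) (p, q) / 2 ^ Suc n" by simp
    qed
  qed
  have diag: "f (i, i) (q, q) = 0" if iv: "(i, i) \<in> V" and qv: "(q, q) \<in> V" and iq: "i < q" and sq: "q - i = s" for i q
  proof -
    have xv: "(i, q - 1) \<in> V" and yv: "(Suc i, q) \<in> V" using iv qv iq by (auto simp: inV)
    have "{(i, q - 1), (Suc i, q)} \<in> tri_edges r"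
      using mid_edges(3)[of i q] iv qv iq by (auto simp: inV)
    then have "f (i, q - 1) (Suc i, q) = 0" by (rule f_edge)
    moreover have "f (i, q - 1) (Suc i, q) = f (i, i) (Suc i, q) / 2^(q - 1 - i)"
      using CL1[OF yv _ sq, of "q - 1 - i"] xv iq by auto
    moreover have "f (i, i) (Suc i, q) = f (i, i) (q, q) / 2^(q - Suc i)"
      using CL2[OF iv sq, of "q - Suc i"] yv by auto
    ultimately show ?thesis by simp
  qed
  have cross: "f (i, j) (p, q) = 0"
    if uv: "(i, j) \<in> V" and pv: "(p, q) \<in> V" and ip: "i < p" and jq: "j < q" and sq: "q - i = s" for i j p q
  proof -
    have iv: "(i, i) \<in> V" and qv: "(q, q) \<in> V" using uv pv by (auto simp: inV)
    have "f (i, j) (p, q) = f (i, i) (p, q) / 2^(j - i)"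
      using CL1[OF pv ip sq, of "j - i"] uv jq by auto
    moreover have "f (i, i) (p, q) = f (i, i) (q, q) / 2^(q - p)"
      using CL2[OF iv sq, of "q - p"] pv ip by auto
    moreover have "f (i, i) (q, q) = 0" using diag[OF iv qv _ sq] ip pv by (auto simp: inV)
    ultimately show ?thesis by simp
  qed
  have main: "f (i, j) (p, q) = 0"
    if uv: "(i, j) \<in> V" and pv: "(p, q) \<in> V" and sp: "max j q - min i p = s" and ip: "i \<le> p"
      and ipq: "i = p \<Longrightarrow> q \<le> j" for i j p q
  proof (cases "i < p")
    case True
    show ?thesis
    proof (cases "j < q")
      case True
      then show ?thesis using cross[OF uv pv \<open>i < p\<close> True] sp \<open>i < p\<close> by simp
    next
      case False
      have ij: "i < j" using False \<open>i < p\<close> pv by (auto simp: inV)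
      have "f (i, j) (p, q) = f (p, q) (i, j)" by (rule f_sym)
      also have "\<dots> = (f (p, q) (i, j - 1) + f (p, q) (Suc i, j)) / 2" by (rule f_rec[OF uv ij])
      also have "f (p, q) (Suc i, j) = 0"
        by (rule IH) (use uv pv ij False \<open>i < p\<close> sp in \<open>auto simp: inV\<close>)
      also have "f (p, q) (i, j - 1) = 0"
      proof (cases "q = j")
        case True
        have "f (i, j - 1) (p, q) = 0"
          by (rule cross) (use uv pv ij True \<open>i < p\<close> sp in \<open>auto simp: inV\<close>)
        then show ?thesis by (simp add: f_sym)
      next
        case False
        show ?thesis
          by (rule IH) (use uv pv ij False \<open>\<not> j < q\<close> \<open>i < p\<close> sp in \<open>auto simp: inV\<close>)
      qed
      finally show ?thesis by simp
    qed
  next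
    case False
    then have ieq: "i = p" using ip by simp
    show ?thesis
    proof (cases "q = j")
      case True
      then show ?thesis using ieq f_refl by simp
    next
      case False
      then have qj: "q < j" using ipq ieq by simp
      have ij: "i < j" using qj pv ieq by (auto simp: inV)
      have "f (i, j) (p, q) = f (p, q) (i, j)" by (rule f_sym)
      also have "\<dots> = (f (p, q) (i, j - 1) + f (p, q) (Suc i, j)) / 2" by (rule f_rec[OF uv ij])
      also have "f (p, q) (i, j - 1) = 0"
        by (rule IH) (use uv pv ij qj ieq sp in \<open>auto simp: inV\<close>)
      also have "f (p, q) (Suc i, j) = 0"
        by (rule cross) (use uv pv ij qj ieq sp in \<open>auto simp: inV\<close>)
      finally show ?thesis by simp
    qed
  qed
  show ?case
  proof (intro allI impI)
    fix i j p q assume uv: "(i, j) \<in> V" and pv: "(p, q) \<in> V" and sp: "max j q - min i p = s"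
    show "f (i, j) (p, q) = 0"
    proof (cases "i < p \<or> (i = p \<and> q \<le> j)")
      case True
      then show ?thesis using main[OF uv pv sp] by auto
    next
      case False
      have "f (p, q) (i, j) = 0"
        by (rule main[OF pv uv]) (use sp False in \<open>auto simp: max.commute min.commute\<close>)
      then show ?thesis by (simp add: f_sym)
    qed
  qed
qed

lemma f_zero: "(i, j) \<in> V \<Longrightarrow> (p, q) \<in> V \<Longrightarrow> f (i, j) (p, q) = 0"
  using f_zero_aux by blast


lemma diag_sqd: "f (a, a) (b, b) = 0 \<Longrightarrow> a \<le> r \<Longrightarrow> b \<le> r \<Longrightarrow>
  sqd k (\<phi> (a, a)) (\<phi> (b, b)) = (if a = b then 0 else 2)"
proof -
  assume f0: "f (a, a) (b, b) = 0" and ar: "a \<le> r" and br: "b \<le> r"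
  have "sqd (Suc r) (Psi (a, a)) (Psi (b, b)) = (if a = b then 0 else 2)"
  proof (cases "a = b")
    case True then show ?thesis by (simp add: sqd_def)
  next
    case False
    have "sqd (Suc r) (Psi (a, a)) (Psi (b, b)) = (\<Sum>c<Suc r. (if c = a then 1 else 0) + (if c = b then 1 else 0))"
      unfolding sqd_def Psi_def using False by (intro sum.cong refl) auto
    also have "\<dots> = 2" using ar br by (simp add: sum.distrib)
    finally show ?thesis using False by simp
  qed
  then show ?thesis using f0 by (simp add: f_def)
qed

lemma lower: "r - 1 \<le> k"
proof (cases "r \<le> 1")
  case True then show ?thesis by simp
next
  case False
  define w where "w a c = \<phi> (a, a) c - \<phi> (1, 1) c" for a c
  define D where "D a b = sqd k (\<phi> (a, a)) (\<phi> (b, b))" for a b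
  have D: "D a b = (if a = b then 0 else 2)" if "a \<in> {1..r}" "b \<in> {1..r}" for a b
    unfolding D_def using that by (intro diag_sqd f_zero) (auto simp: inV)
  have "card {2..r} \<le> k"
  proof (rule gram_bound[where w=w])
    fix a b assume a: "a \<in> {2..r}" and b: "b \<in> {2..r}"
    have "(\<Sum>c<k. w a c * w b c) = (\<Sum>c<k. ((\<phi> (a, a) c - \<phi> (1, 1) c)^2 + (\<phi> (b, b) c - \<phi> (1, 1) c)^2 - (\<phi> (a, a) c - \<phi> (b, b) c)^2) / 2)"
      unfolding w_def by (intro sum.cong refl) (simp add: power2_eq_square algebra_simps)
    also have "\<dots> = (D a 1 + D b 1 - D a b) / 2"
      by (simp add: D_def sqd_def sum_divide_distrib[symmetric] sum_subtractf sum.distrib)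
    also have "\<dots> = (if a = b then 2 else 1)"
      using a b D[of a 1] D[of b 1] D[of a b] by auto
    finally show "(\<Sum>c<k. w a c * w b c) = (if a = b then 2 else 1)" .
  qed simp
  then show ?thesis by simp
qed

end

theorem mainTheorem4:
  fixes r :: nat
  shows "enat (r - 1) \<le> f2 (tri_vertices r) (tri_edges r)"
proof -
  let ?V = "tri_vertices r" and ?E = "tri_edges r" and ?d = "dd r"
  have mem: "?d \<in> {d. distance_function ?V ?E d \<and> l2_realizable ?V ?E d}"
    using dist_fun psi_emb by (auto simp: l2_realizable_def embeddable_def)
  have ex: "\<exists>k. embeddable ?V ?E ?d k" using psi_emb embeddable_def by blast
  have "embeddable ?V ?E ?d (f2_dist ?V ?E ?d)" unfolding f2_dist_def by (rule LeastI_ex[OF ex])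
  then obtain \<phi> where "isometric_embedding ?V ?E ?d (f2_dist ?V ?E ?d) \<phi>"
    unfolding embeddable_def by blast
  then have "r - 1 \<le> f2_dist ?V ?E ?d" by (rule LB.lower[unfolded LB_def])
  then have "enat (r - 1) \<le> enat (f2_dist ?V ?E ?d)" by simp
  also have "\<dots> \<le> f2 ?V ?E" unfolding f2_def by (rule SUP_upper[OF mem])
  finally show ?thesis .
qed

end
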